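(* Let a binary game be given as described in the context, and suppose Assumptions (A1) and (A2) hold. (i) If $\big(x_i,y_i,\widetilde y_i^{(1)},\widetilde y_i^{(0)},\widetilde\lambda_i^{(1)},\widetilde\lambda_i^{(0)},\kappa_i^{(1)},\kappa_i^{(0)},\zeta_i^{(1)},\zeta_i^{(0)}\big)_{i\in I}$ is an optimal solution of problem (P), then $(x_i,y_i)_{i\in I}$ with compensation $(\zeta_i)_{i\in I}$, $\zeta_i=\zeta_i^{(1)}+\zeta_i^{(0)}$, is a binary quasi-equilibrium. (ii) Conversely, if $(x_i,y_i)_{i\in I}$ with compensation $(\zeta_i)_{i\in I}$ is a binary quasi-equilibrium, then there exist vectors $\big(\widetilde y_i^{(1)},\widetilde y_i^{(0)},\widetilde\lambda_i^{(1)},\widetilde\lambda_i^{(0)},\kappa_i^{(1)},\kappa_i^{(0)},\zeta_i^{(1)},\zeta_i^{(0)}\big)_{i\in I}$ such that the combined point is feasible for problem (P).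
   Context: Binary game: players $i\in I=\{1,\dots,n\}$. Player $i$ chooses $x_i\in\{0,1\}$ and $y_i\in\mathbb{R}^m$ and solves $\min f_i(x_i,y_i,y_{-i})$ subject to $g_i(x_i,y_i)\le 0$, with $g_i:\{0,1\}\times\mathbb{R}^m\to\mathbb{R}^k$, $y_{-i}=(y_j)_{j\ne i}$; $K_i=\{(x_i,y_i):g_i(x_i,y_i)\le0\}$. Binary quasi-equilibrium: a vector $((x_i^*,y_i^* )\in K_i)_{i\in I}$ and compensations $\zeta_i\ge0$ such that for every $i$: (1) $y_i^*$ minimizes $f_i(x_i^*,\cdot,y_{-i}^* )$ over $\{y_i:g_i(x_i^*,y_i)\le0\}$; (2) $f_i(x_i^*,y_i^*,y_{-i}^* )-\zeta_i\le f_i(x_i^\times,y_i^\times,y_{-i}^* )$, where $x_i^\times=1-x_i^*$ and $y_i^\times$ minimizes $f_i(x_i^\times,\cdot,y_{-i}^* )$ over $\{y_i:g_i(x_i^\times,y_i)\le0\}$; (3) $\zeta_i$ is the minimal nonnegative number satisfying (2). Assumption (A1): for each $i$ and each fixed $x_i$ (and fixed $y_{-i}$), the KKT conditions of player $i$'s problem with respect to $y_i$ are necessary and sufficient, and $\{y_i:g_i(x_i,y_i)\le0\}$ is compact and non-empty. Assumption (A2): $F$ and $G$ (below) are convex quadratic or linear functions for every fixed value of the binary variables, and $\partial G/\partial\zeta_i>0$ for all $i$. Problem (P): with a sufficiently large constant $\widetilde K>0$ (larger than the difference between any upper and lower bounds on each $y_i$ and than the difference between maximum and minimum of each $f_i$),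 minimize $F((x_i,y_i)_{i\in I})+G((\zeta_i^{(1)},\zeta_i^{(0)})_{i\in I})$ over $x_i\in\{0,1\}$, $y_i,\widetilde y_i^{(1)},\widetilde y_i^{(0)}\in\mathbb{R}^m$, $\widetilde\lambda_i^{(1)},\widetilde\lambda_i^{(0)}\in\mathbb{R}^k_+$, $\kappa_i^{(1)},\kappa_i^{(0)},\zeta_i^{(1)},\zeta_i^{(0)}\in\mathbb{R}_+$, subject to, for all $i$ and $b\in\{0,1\}$: $\nabla_{y_i} f_i(b,\widetilde y_i^{(b)},y_{-i})+(\widetilde\lambda_i^{(b)})^T\nabla_{y_i} g_i(b,\widetilde y_i^{(b)})=0$; $0\le -g_i(b,\widetilde y_i^{(b)})\perp\widetilde\lambda_i^{(b)}\ge0$; $f_i(1,\widetilde y_i^{(1)},y_{-i})+\kappa_i^{(1)}-\zeta_i^{(1)}-\kappa_i^{(0)}+\zeta_i^{(0)}=f_i(0,\widetilde y_i^{(0)},y_{-i})$; $\kappa_i^{(1)}+\zeta_i^{(1)}\le x_i\widetilde K$; $\kappa_i^{(0)}+\zeta_i^{(0)}\le(1-x_i)\widetilde K$; $\widetilde y_i^{(0)}-x_i\widetilde K\le y_i\le\widetilde y_i^{(0)}+x_i\widetilde K$; $\widetilde y_i^{(1)}-(1-x_i)\widetilde K\le y_i\le\widetilde y_i^{(1)}+(1-x_i)\widetilde K$. *)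

theory Defs
  imports "HOL-Analysis.Analysis"
begin

text \<open>Players are the elements of a finite type 'p; strategy vectors y_i live in real^'m,
  constraint values g_i in real^'k. Binary decisions are booleans (True = 1, False = 0).\<close>

definition minus_i :: "real^'m^'p \<Rightarrow> 'p \<Rightarrow> real^'m^'p" where
  "minus_i y i = (\<chi> j. if j = i then 0 else y $ j)"

definition feas ::
  "('p \<Rightarrow> bool \<Rightarrow> real^'m \<Rightarrow> real^'k) \<Rightarrow> 'p \<Rightarrow> bool \<Rightarrow> (real^'m) set" where
  "feas g i b = {z. \<forall>l. g i b z $ l \<le> 0}"

definition is_minimizer ::
  "('p \<Rightarrow> bool \<Rightarrow> real^'m \<Rightarrow> real^'m^'p \<Rightarrow> real) \<Rightarrow>
   ('p \<Rightarrow> bool \<Rightarrow> real^'m \<Rightarrow> real^'k) \<Rightarrow> 'p \<Rightarrow> bool \<Rightarrow> real^'m^'p \<Rightarrow> real^'m \<Rightarrow> bool" where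
  "is_minimizer f g i b yo z \<longleftrightarrow>
     z \<in> feas g i b \<and> (\<forall>z'\<in>feas g i b. f i b z yo \<le> f i b z' yo)"

text \<open>KKT conditions of player i's problem in y_i (binary b fixed, y_{-i} = yo fixed):
  stationarity of the Lagrangian (gradients as Frechet derivatives), primal feasibility,
  dual feasibility and complementarity.\<close>
definition kkt ::
  "('p \<Rightarrow> bool \<Rightarrow> real^'m \<Rightarrow> real^'m^'p \<Rightarrow> real) \<Rightarrow>
   ('p \<Rightarrow> bool \<Rightarrow> real^'m \<Rightarrow> real^'k) \<Rightarrow> 'p \<Rightarrow> bool \<Rightarrow> real^'m^'p \<Rightarrow> real^'m \<Rightarrow> real^'k \<Rightarrow> bool" where
  "kkt f g i b yo z lam \<longleftrightarrow>
     (\<exists>Df Dg. ((\<lambda>w. f i b w yo) has_derivative Df) (at z) \<and>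
        (\<forall>l. ((\<lambda>w. g i b w $ l) has_derivative Dg l) (at z)) \<and>
        (\<forall>h. Df h + (\<Sum>l\<in>UNIV. lam $ l * Dg l h) = 0)) \<and>
     (\<forall>l. 0 \<le> - (g i b z $ l) \<and> 0 \<le> lam $ l \<and> (- (g i b z $ l)) * lam $ l = 0)"

definition A1 ::
  "('p \<Rightarrow> bool \<Rightarrow> real^'m \<Rightarrow> real^'m^'p \<Rightarrow> real) \<Rightarrow>
   ('p \<Rightarrow> bool \<Rightarrow> real^'m \<Rightarrow> real^'k) \<Rightarrow> bool" where
  "A1 f g \<longleftrightarrow> (\<forall>i b y.
     compact (feas g i b) \<and> feas g i b \<noteq> {} \<and>
     (\<forall>z. is_minimizer f g i b (minus_i y i) z \<longleftrightarrow> (\<exists>lam. kkt f g i b (minus_i y i) z lam)))"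

definition convex_quadratic_or_linear :: "('a::real_vector \<Rightarrow> real) \<Rightarrow> bool" where
  "convex_quadratic_or_linear q \<longleftrightarrow> convex_on UNIV q \<and>
     (\<exists>B L d. bilinear B \<and> linear L \<and> (\<forall>v. q v = B v v + L v + d))"

definition A2 ::
  "(('p \<Rightarrow> bool) \<Rightarrow> real^'m^'p \<Rightarrow> real) \<Rightarrow> (real^'p \<Rightarrow> real^'p \<Rightarrow> real) \<Rightarrow> bool" where
  "A2 F G \<longleftrightarrow> (\<forall>x. convex_quadratic_or_linear (F x)) \<and>
     convex_quadratic_or_linear (\<lambda>(z1, z0). G z1 z0) \<and>
     (\<forall>z1 z0. (\<forall>j. 0 \<le> z1 $ j \<and> 0 \<le> z0 $ j) \<longrightarrow>
        (\<exists>D. ((\<lambda>(a, b). G a b) has_derivative D) (at (z1, z0)) \<and>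
             (\<forall>i. D (axis i 1, 0) > 0 \<and> D (0, axis i 1) > 0)))"

definition binary_quasi_eq ::
  "('p \<Rightarrow> bool \<Rightarrow> real^'m \<Rightarrow> real^'m^'p \<Rightarrow> real) \<Rightarrow>
   ('p \<Rightarrow> bool \<Rightarrow> real^'m \<Rightarrow> real^'k) \<Rightarrow>
   ('p \<Rightarrow> bool) \<Rightarrow> real^'m^'p \<Rightarrow> real^'p \<Rightarrow> bool" where
  "binary_quasi_eq f g x y zeta \<longleftrightarrow> (\<forall>i.
     y $ i \<in> feas g i (x i) \<and> 0 \<le> zeta $ i \<and>
     is_minimizer f g i (x i) (minus_i y i) (y $ i) \<and>
     (\<exists>yx. is_minimizer f g i (\<not> x i) (minus_i y i) yx \<and>
        f i (x i) (y $ i) (minus_i y i) - zeta $ i \<le> f i (\<not> x i) yx (minus_i y i) \<and>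
        (\<forall>z'. 0 \<le> z' \<and> f i (x i) (y $ i) (minus_i y i) - z' \<le> f i (\<not> x i) yx (minus_i y i)
               \<longrightarrow> zeta $ i \<le> z')))"

text \<open>Feasibility for problem (P). The auxiliary variables indexed by b :: bool
  (True = superscript (1), False = superscript (0)).\<close>
definition P_feasible ::
  "('p \<Rightarrow> bool \<Rightarrow> real^'m \<Rightarrow> real^'m^'p \<Rightarrow> real) \<Rightarrow>
   ('p \<Rightarrow> bool \<Rightarrow> real^'m \<Rightarrow> real^'k) \<Rightarrow> real \<Rightarrow>
   ('p \<Rightarrow> bool) \<Rightarrow> real^'m^'p \<Rightarrow> (bool \<Rightarrow> real^'m^'p) \<Rightarrow> (bool \<Rightarrow> real^'k^'p) \<Rightarrow>
   (bool \<Rightarrow> real^'p) \<Rightarrow> (bool \<Rightarrow> real^'p) \<Rightarrow> bool" where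
  "P_feasible f g K x y yt lam kap zet \<longleftrightarrow> (\<forall>i.
     (\<forall>b. kkt f g i b (minus_i y i) (yt b $ i) (lam b $ i) \<and>
          0 \<le> kap b $ i \<and> 0 \<le> zet b $ i) \<and>
     f i True (yt True $ i) (minus_i y i) + kap True $ i - zet True $ i
       - kap False $ i + zet False $ i = f i False (yt False $ i) (minus_i y i) \<and>
     kap True $ i + zet True $ i \<le> of_bool (x i) * K \<and>
     kap False $ i + zet False $ i \<le> (1 - of_bool (x i)) * K \<and>
     (\<forall>l. yt False $ i $ l - of_bool (x i) * K \<le> y $ i $ l \<and>
          y $ i $ l \<le> yt False $ i $ l + of_bool (x i) * K) \<and>
     (\<forall>l. yt True $ i $ l - (1 - of_bool (x i)) * K \<le> y $ i $ l \<and>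
          y $ i $ l \<le> yt True $ i $ l + (1 - of_bool (x i)) * K))"

definition P_objective ::
  "(('p \<Rightarrow> bool) \<Rightarrow> real^'m^'p \<Rightarrow> real) \<Rightarrow> (real^'p \<Rightarrow> real^'p \<Rightarrow> real) \<Rightarrow>
   ('p \<Rightarrow> bool) \<Rightarrow> real^'m^'p \<Rightarrow> (bool \<Rightarrow> real^'p) \<Rightarrow> real" where
  "P_objective F G x y zet = F x y + G (zet True) (zet False)"

definition P_optimal where
  "P_optimal f g K F G x y yt lam kap zet \<longleftrightarrow>
     P_feasible f g K x y yt lam kap zet \<and>
     (\<forall>x' y' yt' lam' kap' zet'. P_feasible f g K x' y' yt' lam' kap' zet' \<longrightarrow>
        P_objective F G x y zet \<le> P_objective F G x' y' zet')"

definition K_large ::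
  "('p \<Rightarrow> bool \<Rightarrow> real^'m \<Rightarrow> real^'m^'p \<Rightarrow> real) \<Rightarrow>
   ('p \<Rightarrow> bool \<Rightarrow> real^'m \<Rightarrow> real^'k) \<Rightarrow> real \<Rightarrow> bool" where
  "K_large f g K \<longleftrightarrow> 0 < K \<and> (\<forall>i b b' z z'. z \<in> feas g i b \<longrightarrow> z' \<in> feas g i b' \<longrightarrow>
     (\<forall>l. \<bar>z $ l - z' $ l\<bar> < K) \<and>
     (\<forall>y. (\<forall>j. \<exists>c. y $ j \<in> feas g j c) \<longrightarrow>
        \<bar>f i b z (minus_i y i) - f i b' z' (minus_i y i)\<bar> < K))"

end

theory Submission
  imports Defs
begin
lemma dec:
  fixes H :: "'a::real_normed_vector \<Rightarrow> real"
  assumes "(H has_derivative D) (at p)" and "D v > 0"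
  shows "\<exists>d>0. \<forall>h>0. h < d \<longrightarrow> H (p - h *\<^sub>R v) < H p"
proof -
  have lD: "linear D" using assms(1) has_derivative_linear by blast
  have l: "((\<lambda>t::real. p + t *\<^sub>R v) has_derivative (\<lambda>t. t *\<^sub>R v)) (at 0)"
    by (auto intro!: derivative_eq_intros)
  have "((\<lambda>t. H (p + t *\<^sub>R v)) has_derivative (\<lambda>t. D (t *\<^sub>R v))) (at 0)"
    using has_derivative_compose[OF l] assms(1) by (simp add: o_def)
  moreover have "(\<lambda>t. D (t *\<^sub>R v)) = (*) (D v)"
    using lD by (auto simp: linear_scale)
  ultimately have "((\<lambda>t. H (p + t *\<^sub>R v)) has_real_derivative D v) (at 0)"
    by (simp add: has_field_derivative_def)
  from DERIV_pos_inc_left[OF this assms(2)] show ?thesis by simp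
qed

lemma feas_mod:
  assumes "P_feasible f g K x y yt lam kap zet" "0 \<le> h" "h \<le> kap b $ i" "h \<le> zet b $ i"
  shows "P_feasible f g K x y yt lam (kap(b := kap b - h *\<^sub>R axis i 1))
            (zet(b := zet b - h *\<^sub>R axis i 1))"
  unfolding P_feasible_def
proof (intro allI)
  fix j
  have a: "(\<forall>b. kkt f g j b (minus_i y j) (yt b $ j) (lam b $ j) \<and>
          0 \<le> kap b $ j \<and> 0 \<le> zet b $ j) \<and>
     f j True (yt True $ j) (minus_i y j) + kap True $ j - zet True $ j
       - kap False $ j + zet False $ j = f j False (yt False $ j) (minus_i y j) \<and>
     kap True $ j + zet True $ j \<le> of_bool (x j) * K \<and>
     kap False $ j + zet False $ j \<le> (1 - of_bool (x j)) * K \<and>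
     (\<forall>l. yt False $ j $ l - of_bool (x j) * K \<le> y $ j $ l \<and>
          y $ j $ l \<le> yt False $ j $ l + of_bool (x j) * K) \<and>
     (\<forall>l. yt True $ j $ l - (1 - of_bool (x j)) * K \<le> y $ j $ l \<and>
          y $ j $ l \<le> yt True $ j $ l + (1 - of_bool (x j)) * K)"
    using assms(1) unfolding P_feasible_def by blast
  show "(\<forall>ba. kkt f g j ba (minus_i y j) (yt ba $ j) (lam ba $ j) \<and>
          0 \<le> (kap(b := kap b - h *\<^sub>R axis i 1)) ba $ j \<and> 0 \<le> (zet(b := zet b - h *\<^sub>R axis i 1)) ba $ j) \<and>
     f j True (yt True $ j) (minus_i y j) + (kap(b := kap b - h *\<^sub>R axis i 1)) True $ j - (zet(b := zet b - h *\<^sub>R axis i 1)) True $ j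
       - (kap(b := kap b - h *\<^sub>R axis i 1)) False $ j + (zet(b := zet b - h *\<^sub>R axis i 1)) False $ j = f j False (yt False $ j) (minus_i y j) \<and>
     (kap(b := kap b - h *\<^sub>R axis i 1)) True $ j + (zet(b := zet b - h *\<^sub>R axis i 1)) True $ j \<le> of_bool (x j) * K \<and>
     (kap(b := kap b - h *\<^sub>R axis i 1)) False $ j + (zet(b := zet b - h *\<^sub>R axis i 1)) False $ j \<le> (1 - of_bool (x j)) * K \<and>
     (\<forall>l. yt False $ j $ l - of_bool (x j) * K \<le> y $ j $ l \<and>
          y $ j $ l \<le> yt False $ j $ l + of_bool (x j) * K) \<and>
     (\<forall>l. yt True $ j $ l - (1 - of_bool (x j)) * K \<le> y $ j $ l \<and>
          y $ j $ l \<le> yt True $ j $ l + (1 - of_bool (x j)) * K)"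
    using a assms(2-4) by (cases "j = i"; cases b) (auto simp: axis_def)
qed

lemma improve:
  fixes f :: "'p::finite \<Rightarrow> bool \<Rightarrow> real^'m \<Rightarrow> real^'m^'p \<Rightarrow> real"
  assumes opt: "P_optimal f g K F G x y yt lam kap zet" and A2: "A2 F G"
    and k: "kap b $ i > 0" and z: "zet b $ i > 0"
  shows False
proof -
  have fe: "P_feasible f g K x y yt lam kap zet" using opt P_optimal_def by blast
  have nn: "\<forall>j. 0 \<le> zet True $ j \<and> 0 \<le> zet False $ j" using fe unfolding P_feasible_def by blast
  obtain D where D: "((\<lambda>(a, b). G a b) has_derivative D) (at (zet True, zet False))"
    and Dp: "\<forall>i. D (axis i 1, 0) > 0 \<and> D (0, axis i 1) > 0"
    using A2 nn unfolding A2_def by blast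
  define v :: "(real^'p) \<times> (real^'p)" where "v = (if b then (axis i 1, 0) else (0, axis i 1))"
  have "D v > 0" using Dp by (simp add: v_def)
  from dec[OF D this] obtain d where d: "d > 0"
    and dd: "\<forall>h>0. h < d \<longrightarrow> (\<lambda>(a, b). G a b) ((zet True, zet False) - h *\<^sub>R v) < (\<lambda>(a, b). G a b) (zet True, zet False)"
    by blast
  define h where "h = min (min (kap b $ i) (zet b $ i)) (d/2)"
  have h0: "h > 0" "h < d" using k z d by (auto simp: h_def)
  define kap' where "kap' = kap(b := kap b - h *\<^sub>R axis i 1)"
  define zet' where "zet' = zet(b := zet b - h *\<^sub>R axis i 1)"
  have fe': "P_feasible f g K x y yt lam kap' zet'"
    unfolding kap'_def zet'_def by (rule feas_mod[OF fe]) (use h0 in \<open>auto simp: h_def\<close>)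
  have "P_objective F G x y zet \<le> P_objective F G x y zet'"
    using opt fe' unfolding P_optimal_def by blast
  hence le: "G (zet True) (zet False) \<le> G (zet' True) (zet' False)" by (simp add: P_objective_def)
  have "(zet True, zet False) - h *\<^sub>R v = (zet' True, zet' False)"
    by (cases b) (auto simp: zet'_def v_def)
  with dd h0 have "G (zet' True) (zet' False) < G (zet True) (zet False)" by fastforce
  with le show False by simp
qed
lemma partI:
  fixes f :: "'p::finite \<Rightarrow> bool \<Rightarrow> real^'m \<Rightarrow> real^'m^'p \<Rightarrow> real"
  assumes A1: "A1 f g" and A2: "A2 F G" and opt: "P_optimal f g K F G x y yt lam kap zet"
  shows "binary_quasi_eq f g x y (zet True + zet False)"
  unfolding binary_quasi_eq_def
proof (intro allI)
  fix i
  have fe: "P_feasible f g K x y yt lam kap zet" using opt P_optimal_def by blast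
  define mi where "mi = minus_i y i"
  have a: "(\<forall>b. kkt f g i b mi (yt b $ i) (lam b $ i) \<and>
          0 \<le> kap b $ i \<and> 0 \<le> zet b $ i) \<and>
     f i True (yt True $ i) mi + kap True $ i - zet True $ i
       - kap False $ i + zet False $ i = f i False (yt False $ i) mi \<and>
     kap True $ i + zet True $ i \<le> of_bool (x i) * K \<and>
     kap False $ i + zet False $ i \<le> (1 - of_bool (x i)) * K \<and>
     (\<forall>l. yt False $ i $ l - of_bool (x i) * K \<le> y $ i $ l \<and>
          y $ i $ l \<le> yt False $ i $ l + of_bool (x i) * K) \<and>
     (\<forall>l. yt True $ i $ l - (1 - of_bool (x i)) * K \<le> y $ i $ l \<and>
          y $ i $ l \<le> yt True $ i $ l + (1 - of_bool (x i)) * K)"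
    using fe unfolding P_feasible_def mi_def by blast
  have mins: "is_minimizer f g i b mi (yt b $ i)" for b
    using A1 a unfolding A1_def mi_def by blast
  have yi: "y $ i = yt (x i) $ i"
    using a by (cases "x i") (auto simp: vec_eq_iff intro: order_antisym)
  have nn: "0 \<le> kap b $ i" "0 \<le> zet b $ i" for b using a by auto
  have nnT: "0 \<le> kap True $ i" "0 \<le> zet True $ i" "0 \<le> kap False $ i" "0 \<le> zet False $ i"
    using nn by auto
  have nokz: "\<not> (kap b $ i > 0 \<and> zet b $ i > 0)" for b
    using improve[OF opt A2] by blast
  show "y $ i \<in> feas g i (x i) \<and> 0 \<le> (zet True + zet False) $ i \<and>
     is_minimizer f g i (x i) (minus_i y i) (y $ i) \<and>
     (\<exists>yx. is_minimizer f g i (\<not> x i) (minus_i y i) yx \<and>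
        f i (x i) (y $ i) (minus_i y i) - (zet True + zet False) $ i \<le> f i (\<not> x i) yx (minus_i y i) \<and>
        (\<forall>z'. 0 \<le> z' \<and> f i (x i) (y $ i) (minus_i y i) - z' \<le> f i (\<not> x i) yx (minus_i y i)
               \<longrightarrow> (zet True + zet False) $ i \<le> z'))"
  proof (intro conjI exI[of _ "yt (\<not> x i) $ i"])
    show "y $ i \<in> feas g i (x i)" using mins[of "x i"] yi by (simp add: is_minimizer_def)
    show "0 \<le> (zet True + zet False) $ i" using a by simp
    show "is_minimizer f g i (x i) (minus_i y i) (y $ i)" using mins[of "x i"] yi mi_def by simp
    show "is_minimizer f g i (\<not> x i) (minus_i y i) (yt (\<not> x i) $ i)" using mins mi_def by simp
    show "f i (x i) (y $ i) (minus_i y i) - (zet True + zet False) $ i \<le> f i (\<not> x i) (yt (\<not> x i) $ i) (minus_i y i)"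
      proof (cases "x i")
        case True
        have "kap False $ i + zet False $ i \<le> 0" "f i True (yt True $ i) mi + kap True $ i - zet True $ i
       - kap False $ i + zet False $ i = f i False (yt False $ i) mi" using a True by auto
        then show ?thesis using True yi nnT unfolding mi_def[symmetric] by simp
      next
        case False
        have "kap True $ i + zet True $ i \<le> 0" "f i True (yt True $ i) mi + kap True $ i - zet True $ i
       - kap False $ i + zet False $ i = f i False (yt False $ i) mi" using a False by auto
        then show ?thesis using False yi nnT unfolding mi_def[symmetric] by simp
      qed
    show "\<forall>z'. 0 \<le> z' \<and> f i (x i) (y $ i) (minus_i y i) - z' \<le> f i (\<not> x i) (yt (\<not> x i) $ i) (minus_i y i)
               \<longrightarrow> (zet True + zet False) $ i \<le> z'"
    proof (intro allI impI, rule ccontr)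
      fix z' assume h: "0 \<le> z' \<and> f i (x i) (y $ i) (minus_i y i) - z' \<le> f i (\<not> x i) (yt (\<not> x i) $ i) (minus_i y i)"
        and c: "\<not> (zet True + zet False) $ i \<le> z'"
      show False
      proof (cases "x i")
        case True
        have e: "kap False $ i + zet False $ i \<le> 0" "f i True (yt True $ i) mi + kap True $ i - zet True $ i
       - kap False $ i + zet False $ i = f i False (yt False $ i) mi" using a True by auto
        have "\<not> (kap True $ i > 0 \<and> zet True $ i > 0)" by (rule nokz)
        then show False using True yi nnT h c e unfolding mi_def[symmetric] by simp
      next
        case False
        have e: "kap True $ i + zet True $ i \<le> 0" "f i True (yt True $ i) mi + kap True $ i - zet True $ i
       - kap False $ i + zet False $ i = f i False (yt False $ i) mi" using a False by auto
        have "\<not> (kap False $ i > 0 \<and> zet False $ i > 0)" by (rule nokz)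
        then show False using False yi nnT h c e unfolding mi_def[symmetric] by simp
      qed
    qed
  qed
qed

lemma partII:
  fixes f :: "'p::finite \<Rightarrow> bool \<Rightarrow> real^'m \<Rightarrow> real^'m^'p \<Rightarrow> real"
  assumes A1: "A1 f g" and KL: "K_large f g K" and q: "binary_quasi_eq f g x y zeta"
  shows "\<exists>yt lam kap zet. P_feasible f g K x y yt lam kap zet"
proof -
  have "\<forall>i. \<exists>yx. is_minimizer f g i (\<not> x i) (minus_i y i) yx" using q unfolding binary_quasi_eq_def by blast
  then obtain yx where yx: "\<And>i. is_minimizer f g i (\<not> x i) (minus_i y i) (yx i)" by metis
  have my: "is_minimizer f g i (x i) (minus_i y i) (y $ i)" for i using q unfolding binary_quasi_eq_def by blast
  have yf: "\<forall>j. \<exists>c. y $ j \<in> feas g j c" using q unfolding binary_quasi_eq_def by blast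
  define yt where "yt b = (\<chi> i. if b = x i then y $ i else yx i)" for b
  have ytm: "is_minimizer f g i b (minus_i y i) (yt b $ i)" for b i
    using my yx by (cases "b = x i") (auto simp: yt_def)
  define lam where "lam b = (\<chi> i. SOME l. kkt f g i b (minus_i y i) (yt b $ i) l)" for b
  have kk: "kkt f g i b (minus_i y i) (yt b $ i) (lam b $ i)" for b i
  proof -
    have "\<exists>l. kkt f g i b (minus_i y i) (yt b $ i) l" using A1 ytm unfolding A1_def by blast
    then show ?thesis unfolding lam_def by (simp add: someI_ex)
  qed
  define d where "d i = f i False (yt False $ i) (minus_i y i) - f i True (yt True $ i) (minus_i y i)" for i
  have dK: "\<bar>d i\<bar> < K" for i
  proof -
    have "yt False $ i \<in> feas g i False" "yt True $ i \<in> feas g i True"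
      using ytm by (auto simp: is_minimizer_def)
    then show ?thesis using KL yf unfolding K_large_def d_def by blast
  qed
  have K0: "0 < K" using KL K_large_def by blast
  have yd: "\<bar>yt b $ i $ l - y $ i $ l\<bar> < K" for b i l
  proof -
    obtain c where "y $ i \<in> feas g i c" using yf by blast
    moreover have "yt b $ i \<in> feas g i b" using ytm by (auto simp: is_minimizer_def)
    ultimately show ?thesis using KL unfolding K_large_def by blast
  qed
  define kap where "kap b = (\<chi> i. if b = x i then (if b then max 0 (d i) else max 0 (- d i)) else 0)" for b
  define zet where "zet b = (\<chi> i. if b = x i then (if b then max 0 (- d i) else max 0 (d i)) else 0)" for b
  have "P_feasible f g K x y yt lam kap zet"
    unfolding P_feasible_def
  proof (rule allI, intro conjI)
    fix i
    show "\<forall>b. kkt f g i b (minus_i y i) (yt b $ i) (lam b $ i) \<and> 0 \<le> kap b $ i \<and> 0 \<le> zet b $ i"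
      using kk by (auto simp: kap_def zet_def)
    show "f i True (yt True $ i) (minus_i y i) + kap True $ i - zet True $ i - kap False $ i + zet False $ i =
        f i False (yt False $ i) (minus_i y i)"
      by (cases "x i") (auto simp: kap_def zet_def d_def max_def)
    show "kap True $ i + zet True $ i \<le> of_bool (x i) * K"
      using dK[of i] by (cases "x i") (auto simp: kap_def zet_def max_def)
    show "kap False $ i + zet False $ i \<le> (1 - of_bool (x i)) * K"
      using dK[of i] by (cases "x i") (auto simp: kap_def zet_def max_def)
    show "\<forall>l. yt False $ i $ l - of_bool (x i) * K \<le> y $ i $ l \<and> y $ i $ l \<le> yt False $ i $ l + of_bool (x i) * K"
    proof (intro allI)
      fix l show "yt False $ i $ l - of_bool (x i) * K \<le> y $ i $ l \<and> y $ i $ l \<le> yt False $ i $ l + of_bool (x i) * K"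
        using yd[of False i l] K0 by (cases "x i") (auto simp: yt_def abs_less_iff)
    qed
    show "\<forall>l. yt True $ i $ l - (1 - of_bool (x i)) * K \<le> y $ i $ l \<and> y $ i $ l \<le> yt True $ i $ l + (1 - of_bool (x i)) * K"
    proof (intro allI)
      fix l show "yt True $ i $ l - (1 - of_bool (x i)) * K \<le> y $ i $ l \<and> y $ i $ l \<le> yt True $ i $ l + (1 - of_bool (x i)) * K"
        using yd[of True i l] K0 by (cases "x i") (auto simp: yt_def abs_less_iff)
    qed
  qed
  then show ?thesis by blast
qed



theorem theorem2:
  fixes f :: "'p::finite \<Rightarrow> bool \<Rightarrow> real^'m \<Rightarrow> real^'m^'p \<Rightarrow> real"
    and g :: "'p \<Rightarrow> bool \<Rightarrow> real^'m \<Rightarrow> real^'k"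
    and F :: "('p \<Rightarrow> bool) \<Rightarrow> real^'m^'p \<Rightarrow> real"
    and G :: "real^'p \<Rightarrow> real^'p \<Rightarrow> real"
    and K :: real
  assumes "A1 f g" and "A2 F G" and "K_large f g K"
  shows "(\<forall>x y yt lam kap zet. P_optimal f g K F G x y yt lam kap zet \<longrightarrow>
            binary_quasi_eq f g x y (zet True + zet False)) \<and>
         (\<forall>x y zeta. binary_quasi_eq f g x y zeta \<longrightarrow>
            (\<exists>yt lam kap zet. P_feasible f g K x y yt lam kap zet))"
proof (intro conjI allI impI)
  fix x y yt lam kap zet assume "P_optimal f g K F G x y yt lam kap zet"
  then show "binary_quasi_eq f g x y (zet True + zet False)" by (rule partI[OF assms(1,2)])
next
  fix x y zeta assume "binary_quasi_eq f g x y zeta"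
  then show "\<exists>yt lam kap zet. P_feasible f g K x y yt lam kap zet" by (rule partII[OF assms(1,3)])
qed

end
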